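(* The function $y\mapsto f_1(yi)$, $y>0$, has exactly one critical point, at $y=1$. Moreover $Y_1(yi)>0$ for $y\in(0,1)$ and $Y_1(yi)<0$ for $y\in(1,\infty)$.
   Context: $\operatorname e(z)=e^{2\pi iz}$, $\eta(z)=\operatorname e(z/6)\prod_{n\ge1}(1-\operatorname e(nz))^4$ for $\operatorname{Im}z>0$, $f_1(z)=\log|\operatorname{Im}(z)\eta(z)|$, and with $z=x+iy$, $Y_1=\partial f_1/\partial y$. *)

theory Defs
  imports "HOL-Analysis.Analysis"
begin

definition e :: "complex \<Rightarrow> complex" where
  "e z = exp (2 * of_real pi * \<i> * z)"

definition eta :: "complex \<Rightarrow> complex" where
  "eta z = e (z / 6) * (\<Prod>n. (1 - e (of_nat (Suc n) * z)) ^ 4)"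

definition f1 :: "complex \<Rightarrow> real" where
  "f1 z = ln (cmod (of_real (Im z) * eta z))"

definition Y1 :: "complex \<Rightarrow> real" where
  "Y1 z = deriv (\<lambda>t. f1 (Complex (Re z) t)) (Im z)"

end

theory Submission
  imports Defs "HOL-Real_Asymp.Real_Asymp"
begin

lemma nat_summable_on: fixes a :: "nat \<Rightarrow> real"
  assumes "summable a" "\<And>i. 0 \<le> a i" shows "a summable_on UNIV"
  using sums_nonneg_imp_has_sum[of a "suminf a"] assms summable_sums
  by (auto simp: summable_on_def)

lemma sums_has_sum_nat: fixes f :: "nat \<Rightarrow> real"
  assumes "f summable_on UNIV" "f sums s" shows "(f has_sum s) UNIV"
proof -
  have "f sums infsum f UNIV" using assms(1) has_sum_imp_sums has_sum_infsum by blast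
  then have "infsum f UNIV = s" using assms(2) sums_unique2 by blast
  then show ?thesis using assms(1) has_sum_infsum by fastforce
qed

lemma prod_summable_on: fixes a b :: "nat \<Rightarrow> real"
  assumes "summable a" "summable b" "\<And>i. 0 \<le> a i" "\<And>j. 0 \<le> b j"
  shows "(\<lambda>p. norm ((\<lambda>(i,j). a i * b j) p)) summable_on (UNIV \<times> UNIV)"
proof -
  have sa: "a summable_on UNIV" and sb: "b summable_on UNIV" using assms nat_summable_on by auto
  have "(\<lambda>p. norm ((\<lambda>(i,j). a i * b j) p)) summable_on Sigma UNIV (\<lambda>_. UNIV)"
  proof (subst Infinite_Sum.abs_summable_on_Sigma_iff, intro conjI ballI)
    fix i :: nat
    show "(\<lambda>y. norm (case (i, y) of (i, j) \<Rightarrow> a i * b j)) summable_on UNIV"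
      using summable_on_cmult_right[OF sb, of "a i"] assms(3,4)
      by (simp add: abs_mult)
  next
    have "(\<lambda>i. a i * infsum b UNIV) summable_on UNIV"
      using summable_on_cmult_left[OF sa] by blast
    moreover have "(\<Sum>\<^sub>\<infinity>y. norm (case (i, y) of (i, j) \<Rightarrow> a i * b j)) = a i * infsum b UNIV" for i
    proof -
      have "(\<lambda>y. norm (case (i, y) of (i, j) \<Rightarrow> a i * b j)) = (\<lambda>y. a i * b y)"
        by (rule ext) (simp add: abs_mult abs_of_nonneg assms(3,4))
      then show ?thesis by (simp only: infsum_cmult_right')
    qed
    moreover have "infsum b UNIV \<ge> 0" by (intro infsum_nonneg) (simp add: assms(4))
    ultimately show "(\<lambda>x. norm (\<Sum>\<^sub>\<infinity>y. norm (case (x, y) of (i, j) \<Rightarrow> a i * b j))) summable_on UNIV"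
      by (simp only: real_norm_def abs_mult abs_of_nonneg assms(3))
  qed
  then show ?thesis by simp
qed

lemma fubini_nat:
  fixes W :: "nat \<Rightarrow> nat \<Rightarrow> real"
  assumes bnd: "\<And>i j. \<bar>W i j\<bar> \<le> a i * b j" and "summable a" "summable b"
    "\<And>i. 0 \<le> a i" "\<And>j. 0 \<le> b j"
    and rs: "\<And>i. (\<lambda>j. W i j) sums r i" and cs: "\<And>j. (\<lambda>i. W i j) sums c j"
  shows "\<exists>S. r sums S \<and> c sums S"
proof -
  have M: "(\<lambda>p. norm ((\<lambda>(i,j). a i * b j) p)) summable_on (UNIV \<times> UNIV)"
    using prod_summable_on assms by blast
  have "(\<lambda>p. norm ((\<lambda>(i,j). W i j) p)) summable_on (UNIV \<times> UNIV)"
    by (rule Infinite_Sum.abs_summable_on_comparison_test[OF M]) (use bnd assms(4,5) in \<open>auto simp: abs_mult\<close>)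
  then have WS: "(\<lambda>(i,j). W i j) summable_on (UNIV \<times> UNIV)" using abs_summable_summable by blast
  then obtain S where HS: "((\<lambda>(i,j). W i j) has_sum S) (UNIV \<times> UNIV)" using summable_on_def by blast
  have rowH: "((\<lambda>j. W i j) has_sum r i) UNIV" for i
  proof (rule sums_has_sum_nat[OF _ rs])
    show "W i summable_on UNIV"
      using summable_on_SigmaD1[OF WS[unfolded Sigma_def[symmetric]], of i] by simp
  qed
  have colH: "((\<lambda>i. W i j) has_sum c j) UNIV" for j
  proof (rule sums_has_sum_nat[OF _ cs])
    have "(\<lambda>(j,i). W i j) summable_on (UNIV \<times> UNIV)"
      using WS summable_on_swap[of "\<lambda>(i,j). W i j" UNIV UNIV] by simp
    then show "(\<lambda>i. W i j) summable_on UNIV"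
      using summable_on_SigmaD1[of "\<lambda>j i. W i j" UNIV "\<lambda>_. UNIV" j] by simp
  qed
  have "(r has_sum S) UNIV"
    by (rule has_sum_SigmaD[OF HS]) (use rowH in auto)
  moreover have "(c has_sum S) UNIV"
  proof (rule has_sum_SigmaD)
    show "((\<lambda>(j,i). W i j) has_sum S) (UNIV \<times> UNIV)"
      using HS has_sum_swap[where f="\<lambda>(i,j). W i j" and A=UNIV and B=UNIV] by simp
  qed (use colH in auto)
  ultimately show ?thesis using has_sum_imp_sums by blast
qed

lemma aux_div: "X \<noteq> 0 \<Longrightarrow> 2*X/X^2 = 2/(X::real)" by (simp add: power2_eq_square)

definition lt :: "nat \<Rightarrow> real \<Rightarrow> real" where
  "lt k x = ln (1 + x^2 / (real (Suc k))^2)"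
definition phi_t :: "nat \<Rightarrow> real \<Rightarrow> real" where
  "phi_t k x = 2*x / (x^2 + (real (Suc k))^2)"
definition psi_t :: "nat \<Rightarrow> real \<Rightarrow> real" where
  "psi_t k x = 2*((real (Suc k))^2 - x^2) / (x^2 + (real (Suc k))^2)^2"

lemma summable_inv_sq: "summable (\<lambda>k. 1 / (real (Suc k))^2)"
  using inverse_squares_sums sums_summable by (simp add: add.commute)

lemma inner_d: "M \<noteq> 0 \<Longrightarrow> ((\<lambda>x. 1 + x^2 / M) has_real_derivative (2*x/M)) (at x within S)"
  by (auto intro!: derivative_eq_intros)

lemma lt_deriv: "(lt k has_real_derivative phi_t k x) (at x within S)"
proof -
  define M where "M = (real (Suc k))^2"
  have m: "M > 0" unfolding M_def by simp
  have p: "1 + x^2 / M > 0" using m by (simp add: add_pos_nonneg)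
  have D: "((\<lambda>x. ln (1 + x^2 / M)) has_real_derivative (1 / (1 + x^2/M) * (2*x/M))) (at x within S)"
    by (rule DERIV_chain2[OF DERIV_ln_divide[OF p] inner_d]) (use m in simp)
  have e: "1 / (1 + x^2/M) * (2*x/M) = 2*x / (x^2 + M)"
    using m p by (simp add: field_simps)
  show ?thesis unfolding lt_def phi_t_def M_def[symmetric] using D unfolding e .
qed

lemma phi_deriv: "(phi_t k has_real_derivative psi_t k x) (at x within S)"
proof -
  define M where "M = (real (Suc k))^2"
  have m: "x^2 + M > 0" unfolding M_def by (simp add: add_nonneg_pos)
  have D: "((\<lambda>x. 2*x / (x^2 + M)) has_real_derivative ((2 * (x^2 + M) - 2*x * (2*x)) / (x^2 + M)^2)) (at x within S)"
    using DERIV_divide[of "\<lambda>x. 2*x" 2 x S "\<lambda>x. x^2 + M" "2*x"] m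
    by (auto intro!: derivative_eq_intros simp: power2_eq_square)
  have e: "(2 * (x^2 + M) - 2*x * (2*x)) / (x^2 + M)^2 = 2*(M - x^2) / (x^2 + M)^2"
    by (simp add: algebra_simps power2_eq_square)
  show ?thesis unfolding psi_t_def phi_t_def M_def[symmetric] using D unfolding e .
qed

lemma phi_bound: "\<bar>y\<bar> \<le> B \<Longrightarrow> norm (phi_t k y) \<le> 2*B / (real (Suc k))^2"
proof -
  assume y: "\<bar>y\<bar> \<le> B"
  have m: "(real (Suc k))^2 > 0" by simp
  have "norm (phi_t k y) = 2*\<bar>y\<bar> / (y^2 + (real (Suc k))^2)"
    unfolding phi_t_def by (simp add: abs_mult)
  also have "\<dots> \<le> 2*\<bar>y\<bar> / (real (Suc k))^2"
    by (rule divide_left_mono) (use m in \<open>auto intro!: mult_pos_pos add_nonneg_pos\<close>)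
  also have "\<dots> \<le> 2*B / (real (Suc k))^2"
    using y by (simp add: divide_right_mono)
  finally show ?thesis .
qed

lemma psi_bound: "norm (psi_t k y) \<le> 2 / (real (Suc k))^2"
proof -
  have m: "(real (Suc k))^2 > 0" by simp
  have q: "y^2 + (real (Suc k))^2 > 0" by (simp add: add_nonneg_pos)
  have "\<bar>(real (Suc k))^2 - y^2\<bar> \<le> y^2 + (real (Suc k))^2"
    using zero_le_power2[of y] zero_le_power2[of "real (Suc k)"] by (simp only: abs_le_iff) linarith
  then have "norm (psi_t k y) \<le> 2 * (y^2 + (real (Suc k))^2) / (y^2 + (real (Suc k))^2)^2"
    unfolding psi_t_def using q by (simp add: abs_mult divide_right_mono)
  also have "\<dots> = 2 / (y^2 + (real (Suc k))^2)"
    by (rule aux_div) (use q in simp)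
  also have "\<dots> \<le> 2 / (real (Suc k))^2"
    by (rule divide_left_mono) (use m in \<open>auto intro!: mult_pos_pos add_nonneg_pos\<close>)
  finally show ?thesis .
qed

definition Phi1 :: "real \<Rightarrow> real" where "Phi1 x = (\<Sum>k. phi_t k x)"
definition Psi :: "real \<Rightarrow> real" where "Psi x = (\<Sum>k. psi_t k x)"

lemma Phi_deriv: "((\<lambda>x. \<Sum>k. lt k x) has_real_derivative Phi1 x) (at x)"
proof -
  let ?S = "ball (0::real) (\<bar>x\<bar> + 1)"
  have "summable (\<lambda>k. 2*(\<bar>x\<bar>+1) * (1 / (real (Suc k))^2))"
    by (rule summable_mult[OF summable_inv_sq])
  moreover have "norm (phi_t n y) \<le> 2*(\<bar>x\<bar>+1) * (1 / (real (Suc n))^2)" if "y \<in> ?S" for n y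
    using phi_bound[of y "\<bar>x\<bar>+1" n] that by simp
  ultimately have U: "uniformly_convergent_on ?S (\<lambda>n y. \<Sum>i<n. phi_t i y)"
    by (intro Weierstrass_m_test') auto
  show ?thesis unfolding Phi1_def
    by (rule has_field_derivative_series'(2)[of ?S lt phi_t 0 x, OF _ _ U])
       (auto simp: lt_deriv lt_def)
qed

lemma Phi1_deriv: "(Phi1 has_real_derivative Psi x) (at x)"
proof -
  let ?S = "ball (0::real) (\<bar>x\<bar> + 1)"
  have "summable (\<lambda>k. 2 * (1 / (real (Suc k))^2))"
    by (rule summable_mult[OF summable_inv_sq])
  then have U: "uniformly_convergent_on ?S (\<lambda>n y. \<Sum>i<n. psi_t i y)"
    by (rule Weierstrass_m_test'[rotated]) (use psi_bound in auto)
  have "((\<lambda>x. \<Sum>k. phi_t k x) has_real_derivative (\<Sum>k. psi_t k x)) (at x)"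
    by (rule has_field_derivative_series'(2)[of ?S phi_t psi_t 0 x, OF _ _ U])
       (auto simp: phi_deriv phi_t_def)
  then show ?thesis unfolding Phi1_def[abs_def] Psi_def .
qed

lemma summable_phi: "summable (\<lambda>k. phi_t k x)"
proof -
  have "summable (\<lambda>k. 2*\<bar>x\<bar> * (1 / (real (Suc k))^2))"
    by (rule summable_mult[OF summable_inv_sq])
  then show ?thesis
    by (rule summable_comparison_test'[where N=0]) (use phi_bound[of x "\<bar>x\<bar>"] in simp)
qed

lemma summable_psi: "summable (\<lambda>k. psi_t k x)"
proof -
  have "summable (\<lambda>k. 2 * (1 / (real (Suc k))^2))"
    by (rule summable_mult[OF summable_inv_sq])
  then show ?thesis
    by (rule summable_comparison_test'[where N=0]) (use psi_bound in auto)
qed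

lemma Phi1_odd: "Phi1 (-x) = - Phi1 x"
proof -
  have "phi_t k (-x) = - phi_t k x" for k unfolding phi_t_def by simp
  then show ?thesis unfolding Phi1_def using suminf_minus[OF summable_phi[of x]] by simp
qed

lemma sinh_prod:
  assumes x: "x > 0"
  shows "(\<lambda>k. lt k x) sums ln (sinh (pi*x) / (pi*x))"
proof -
  let ?z = "\<i> * complex_of_real x"
  have L: "(\<lambda>n. of_real pi * ?z * (\<Prod>k=1..n. 1 - ?z^2 / of_nat k^2)) \<longlonglongrightarrow> sin (of_real pi * ?z)"
    by (rule sin_product_formula_complex)
  have nz: "of_real pi * ?z \<noteq> 0" using x by simp
  have L2: "(\<lambda>n. (of_real pi * ?z * (\<Prod>k=1..n. 1 - ?z^2 / of_nat k^2)) / (of_real pi * ?z))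
      \<longlonglongrightarrow> sin (of_real pi * ?z) / (of_real pi * ?z)"
    by (intro tendsto_divide L tendsto_const nz)
  have e1: "(of_real pi * ?z * (\<Prod>k=1..n. 1 - ?z^2 / of_nat k^2)) / (of_real pi * ?z)
      = complex_of_real (\<Prod>k=1..n. 1 + x^2 / (real k)^2)" for n
    using nz by (simp add: power_mult_distrib)
  have e2: "sin (of_real pi * ?z) / (of_real pi * ?z) = complex_of_real (sinh (pi*x) / (pi*x))"
  proof -
    have "sin (of_real pi * ?z) = sin (\<i> * of_real (pi*x))" by (simp add: mult.commute mult.left_commute)
    also have "\<dots> = \<i> * sinh (of_real (pi*x))" using sinh_conv_sin[of "of_real (pi*x) :: complex"]
      by simp
    also have "sinh (of_real (pi*x) :: complex) = of_real (sinh (pi*x))" unfolding sinh_field_def by (simp flip: exp_of_real)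
    finally show ?thesis using nz by (simp add: field_simps)
  qed
  have L3: "(\<lambda>n. (\<Prod>k=1..n. 1 + x^2 / (real k)^2)) \<longlonglongrightarrow> sinh (pi*x) / (pi*x)"
    using L2 unfolding e1 e2 tendsto_of_real_iff .
  have pos: "sinh (pi*x) / (pi*x) > 0" using x by simp
  have L4: "(\<lambda>n. ln (\<Prod>k=1..n. 1 + x^2 / (real k)^2)) \<longlonglongrightarrow> ln (sinh (pi*x) / (pi*x))"
    by (rule tendsto_ln[OF L3]) (use pos x in simp)
  have e3: "ln (\<Prod>k=1..n. 1 + x^2 / (real k)^2) = (\<Sum>k<n. lt k x)" for n
  proof -
    have "ln (\<Prod>k=1..n. 1 + x^2 / (real k)^2) = (\<Sum>k=1..n. ln (1 + x^2 / (real k)^2))"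
      using add_pos_nonneg[of 1 "x^2/(real _)^2"] by (intro ln_prod) (auto simp del: of_nat_Suc, metis less_irrefl)
    also have "\<dots> = (\<Sum>k<n. lt k x)" unfolding lt_def
      using sum_bounds_lt_plus1[of "\<lambda>k. ln (1 + x^2 / (real k)^2)" n] by simp
    finally show ?thesis .
  qed
  show ?thesis using L4 unfolding e3 sums_def .
qed

lemma Phi_eq: "x > 0 \<Longrightarrow> (\<Sum>k. lt k x) = ln (sinh (pi*x)) - ln (pi*x)"
proof -
  assume x: "x > 0"
  have "ln (sinh (pi*x) / (pi*x)) = ln (sinh (pi*x)) - ln (pi*x)" using x by (simp add: ln_div)
  then have "(\<lambda>k. lt k x) sums (ln (sinh (pi*x)) - ln (pi*x))" using sinh_prod[OF x] by simp
  then show ?thesis by (rule sums_unique[symmetric])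
qed

lemma Phi1_formula:
  assumes x: "x > 0"
  shows "Phi1 x = pi * cosh (pi*x) / sinh (pi*x) - 1/x"
proof -
  let ?G = "\<lambda>y. ln (sinh (pi*y)) - ln (pi*y)"
  have "(?G has_real_derivative (pi * cosh (pi*x) / sinh (pi*x) - 1/x)) (at x)"
    by (rule derivative_eq_intros refl | use x in simp)+
  moreover have "(?G has_real_derivative Phi1 x) (at x)"
    by (rule has_field_derivative_transform_within_open[OF Phi_deriv, of "{0<..}"]) (use x Phi_eq in auto)
  ultimately show ?thesis using DERIV_unique by blast
qed

lemma Psi_alg:
  fixes S Co x :: real
  assumes "S \<noteq> 0" "x \<noteq> 0" "Co*Co = S*S + 1"
  shows "(pi * (S * pi) * S - pi * Co * (Co * pi)) / (S * S) + 1 / (x*x) = 1/x^2 - pi^2 / S^2"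
proof -
  have e1: "pi * (S * pi) * S - pi * Co * (Co * pi) = pi^2 * (S*S - Co*Co)" by (simp add: power2_eq_square algebra_simps)
  have e: "pi * (S * pi) * S - pi * Co * (Co * pi) = - (pi^2)" unfolding e1 assms(3) by simp
  show ?thesis unfolding e using assms(1,2) by (simp add: power2_eq_square)
qed

lemma Psi_formula:
  assumes x: "x > 0"
  shows "Psi x = 1/x^2 - pi^2 / (sinh (pi*x))^2"
proof -
  let ?H = "\<lambda>y. pi * cosh (pi*y) / sinh (pi*y) - 1/y"
  have s: "sinh (pi*x) \<noteq> 0" using x by simp
  have cs: "cosh (pi*x) * cosh (pi*x) = sinh (pi*x) * sinh (pi*x) + 1"
    using cosh_square_eq[of "pi*x"] by (simp only: power2_eq_square)
  have "(?H has_real_derivative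
     (pi * (sinh (pi*x) * pi) * sinh (pi*x) - pi * cosh (pi*x) * (cosh (pi*x) * pi)) / (sinh (pi*x) * sinh (pi*x)) + 1 / (x*x)) (at x)"
    by (rule derivative_eq_intros refl | use x s in simp)+
  then have "(?H has_real_derivative (1/x^2 - pi^2 / (sinh (pi*x))^2)) (at x)"
    using x by (simp only: Psi_alg[OF s _ cs, of x] less_irrefl not_less_iff_gr_or_eq)
  moreover have "(?H has_real_derivative Psi x) (at x)"
    by (rule has_field_derivative_transform_within_open[OF Phi1_deriv, of "{0<..}"]) (use x Phi1_formula in auto)
  ultimately show ?thesis using DERIV_unique by blast
qed

lemma coth_alg:
  fixes E :: real assumes "E > 1"
  shows "(E + inverse E) / (E - inverse E) = (1 + inverse E * inverse E) / (1 - inverse E * inverse E)"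
proof -
  have EE: "E*E > 1" using assms mult_strict_mono[of 1 E 1 E] by simp
  have "E - inverse E \<noteq> 0" "1 - inverse E * inverse E \<noteq> 0" "E \<noteq> 0"
    using assms EE by (auto simp: field_simps)
  then show ?thesis using assms by (simp add: field_simps)
qed

lemma coth_eq:
  fixes y :: real
  assumes y: "y > 0"
  shows "cosh y / sinh y = (1 + exp (-2*y)) / (1 - exp (-2*y))"
proof -
  have E: "exp y > 1" using y by (rule exp_gt_one)
  have h: "(a/2)/(b/2) = a/b" for a b :: real by (cases "b=0") (simp_all add: field_simps)
  have "cosh y / sinh y = (exp y + inverse (exp y)) / (exp y - inverse (exp y))"
    unfolding cosh_field_def sinh_field_def exp_minus by (simp only: h)
  also have "\<dots> = (1 + inverse (exp y) * inverse (exp y)) / (1 - inverse (exp y) * inverse (exp y))"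
    by (rule coth_alg[OF E])
  also have "inverse (exp y) * inverse (exp y) = exp (-2*y)"
    by (simp add: exp_minus[symmetric] exp_add[symmetric])
  finally show ?thesis .
qed

lemma Phi1_lim: "(\<lambda>j::nat. Phi1 (real j + 1/2)) \<longlonglongrightarrow> pi"
proof -
  define q where "q j = exp (-2*(pi*(real j + 1/2)))" for j :: nat
  have qe: "q j = exp (-pi) * exp (-2*pi) ^ j" for j
    unfolding q_def by (simp add: exp_of_nat_mult[symmetric] exp_add[symmetric] algebra_simps)
  have "(\<lambda>j. exp (-2*pi) ^ j) \<longlonglongrightarrow> 0" by (rule LIMSEQ_power_zero) simp
  then have q0: "q \<longlonglongrightarrow> 0" unfolding qe by (rule tendsto_mult_right_zero)
  have i0: "(\<lambda>j::nat. 1 / (real j + 1/2)) \<longlonglongrightarrow> 0" by real_asymp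
  have "(\<lambda>j. pi * ((1 + q j) / (1 - q j)) - 1 / (real j + 1/2)) \<longlonglongrightarrow> pi * ((1 + 0) / (1 - 0)) - 0"
    by (intro tendsto_intros q0 i0) simp
  moreover have "Phi1 (real j + 1/2) = pi * ((1 + q j) / (1 - q j)) - 1 / (real j + 1/2)" for j
  proof -
    have "Phi1 (real j + 1/2) = pi * (cosh (pi*(real j + 1/2)) / sinh (pi*(real j + 1/2))) - 1/(real j + 1/2)"
      by (subst Phi1_formula) simp_all
    also have "cosh (pi*(real j + 1/2)) / sinh (pi*(real j + 1/2)) = (1 + q j) / (1 - q j)"
      unfolding q_def by (rule coth_eq) simp
    finally show ?thesis .
  qed
  ultimately show ?thesis by simp
qed

lemma u_lim: "(\<lambda>j::nat. (real j + 1/2) / (c^2 + (real j + 1/2)^2)) \<longlonglongrightarrow> 0"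
  by real_asymp

definition uu :: "real \<Rightarrow> real \<Rightarrow> real" where "uu c w = w / (c^2 + w^2)"
definition FF :: "real \<Rightarrow> real \<Rightarrow> real" where "FF c d = (d^2 - c^2) / (c^2 + d^2)^2"
definition AA :: "real \<Rightarrow> real \<Rightarrow> real" where "AA c d = uu c (d - 1/2) - uu c (d + 1/2)"
definition wt :: "nat \<Rightarrow> real" where "wt j = (if j = 0 then 1 else 2)"

lemma D_bound:
  assumes c: "c \<ge> 1" and d: "d = real j"
  shows "\<bar>FF c d - AA c d\<bar> \<le> 9 / (c^2 * (1 + d^2))"
proof -
  define s where "s = c^2"
  define R where "R = s + d^2"
  define P1 where "P1 = s + (d - 1/2)^2"
  define P2 where "P2 = s + (d + 1/2)^2"
  define N where "N = (d^2 - s) * (R/2 + 1/16 - d^2) + R^2/4"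
  have s1: "s \<ge> 1" unfolding s_def using c by (simp add: one_le_power)
  have d0: "d \<ge> 0" using d by simp
  have d2: "d^2 \<ge> 0" by simp
  have R1: "R \<ge> 1" unfolding R_def using s1 d2 by linarith
  have dR: "d^2 \<le> R" "s \<le> R" unfolding R_def using s1 d2 by linarith+
  have hP1: "P1 \<ge> R/4"
  proof (cases "j = 0")
    case True then show ?thesis using s1 by (simp add: P1_def R_def d)
  next
    case False
    then have "d \<ge> 1" using d by simp
    then have "d/2 \<le> d - 1/2" by simp
    then have "(d/2)^2 \<le> (d - 1/2)^2" by (rule power_mono) (use d0 in simp)
    then show ?thesis using s1 unfolding P1_def R_def by (simp add: power_divide)
  qed
  have hP2: "P2 \<ge> R" unfolding P2_def R_def using d0 by (simp add: power2_eq_square algebra_simps)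
  have Ppos: "P1 > 0" "P2 > 0" using hP1 hP2 R1 by auto
  have P12: "P1 * P2 = R^2 + (R/2 + 1/16 - d^2)"
    unfolding P1_def P2_def R_def by (simp add: power2_eq_square algebra_simps)
  have numA: "(d - 1/2) * P2 - (d + 1/2) * P1 = d^2 - s - 1/4"
    unfolding P1_def P2_def by (simp add: power2_eq_square algebra_simps)
  have u1: "uu c (d - 1/2) = (d - 1/2) / P1" unfolding uu_def P1_def s_def by (simp add: add.commute)
  have u2: "uu c (d + 1/2) = (d + 1/2) / P2" unfolding uu_def P2_def s_def by (simp add: add.commute)
  have AAe: "AA c d = (d^2 - s - 1/4) / (P1 * P2)"
    unfolding AA_def u1 u2 using Ppos by (simp add: diff_frac_eq numA)
  have FFe: "FF c d = (d^2 - s) / R^2" unfolding FF_def R_def s_def by simp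
  have R2: "R^2 \<noteq> 0" using R1 by simp
  have numD: "(d^2 - s) * (P1 * P2) - (d^2 - s - 1/4) * R^2 = N"
    unfolding P12 N_def by (simp add: power2_eq_square algebra_simps)
  have Aeq: "FF c d - AA c d = N / (R^2 * (P1 * P2))"
    unfolding FFe AAe using Ppos R2 by (simp add: diff_frac_eq numD)
  have N1: "\<bar>d^2 - s\<bar> \<le> R" unfolding abs_le_iff using dR d2 s1 by linarith
  have N2: "\<bar>R/2 + 1/16 - d^2\<bar> \<le> 2*R" unfolding abs_le_iff using dR d2 R1 by linarith
  have "\<bar>(d^2 - s) * (R/2 + 1/16 - d^2)\<bar> \<le> R * (2*R)"
    unfolding abs_mult by (rule mult_mono[OF N1 N2]) (use R1 in auto)
  then have hM: "\<bar>(d^2 - s) * (R/2 + 1/16 - d^2)\<bar> \<le> 2 * R^2" by (simp add: power2_eq_square)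
  have "\<bar>N\<bar> \<le> \<bar>(d^2 - s) * (R/2 + 1/16 - d^2)\<bar> + \<bar>R^2/4\<bar>" unfolding N_def by (rule abs_triangle_ineq)
  moreover have "\<bar>R^2/4\<bar> = R^2/4" by simp
  ultimately have hN: "\<bar>N\<bar> \<le> 9/4 * R^2" using hM by linarith
  have den: "R^2 * (P1 * P2) \<ge> R^2 * (R/4 * R)"
    by (intro mult_left_mono mult_mono hP1 hP2) (use R1 Ppos in auto)
  have "\<bar>FF c d - AA c d\<bar> = \<bar>N\<bar> / (R^2 * (P1 * P2))"
    unfolding Aeq using Ppos R1 by (simp add: abs_divide abs_mult)
  also have "\<dots> \<le> (9/4 * R^2) / (R^2 * (R/4 * R))"
    by (rule frac_le) (use hN den R1 in auto)
  also have "\<dots> = 9 / R^2" using R1 by (simp add: power2_eq_square field_simps)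
  also have "\<dots> \<le> 9 / (c^2 * (1 + d^2))"
  proof (rule divide_left_mono)
    have "c^2 * (1 + d^2) \<le> R * R"
      by (rule mult_mono) (use dR s1 in \<open>auto simp: s_def R_def\<close>)
    then show "c^2 * (1 + d^2) \<le> R^2" by (simp add: power2_eq_square)
    show "0 < R^2 * (c^2 * (1 + d^2))" using R1 c by (simp add: add_pos_nonneg)
  qed simp
  finally show ?thesis .
qed

lemma uu_minus: "uu c (-w) = - uu c w" unfolding uu_def by simp

lemma row_F:
  assumes c: "c > 0"
  shows "(\<lambda>j. wt j * FF c (real j)) sums (-(pi^2) / (sinh (pi*c))^2)"
proof -
  have "(\<lambda>n. wt (Suc n) * FF c (real (Suc n))) = (\<lambda>n. psi_t n c)"
    by (rule ext) (simp add: wt_def FF_def psi_t_def add.commute)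
  then have "(\<lambda>n. wt (Suc n) * FF c (real (Suc n))) sums Psi c"
    using summable_psi[of c] by (simp add: Psi_def summable_sums)
  then have "(\<lambda>j. wt j * FF c (real j)) sums (Psi c + wt 0 * FF c (real 0))"
    using sums_Suc_iff[of "\<lambda>j. wt j * FF c (real j)"] by simp
  moreover have "Psi c + wt 0 * FF c (real 0) = -(pi^2) / (sinh (pi*c))^2"
    using c by (simp add: Psi_formula wt_def FF_def power2_eq_square)
  ultimately show ?thesis by simp
qed

lemma row_A:
  assumes c: "c > 0"
  shows "(\<lambda>j. wt j * AA c (real j)) sums 0"
proof -
  define g where "g n = uu c (real n + 1/2)" for n :: nat
  have g0: "g \<longlonglongrightarrow> 0" unfolding g_def uu_def by (rule u_lim)
  have "(\<lambda>n. g n - g (Suc n)) sums (g 0 - 0)" by (rule telescope_sums'[OF g0])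
  then have "(\<lambda>n. 2 * (g n - g (Suc n))) sums (2 * (g 0 - 0))" by (rule sums_mult)
  moreover have "wt (Suc n) * AA c (real (Suc n)) = 2 * (g n - g (Suc n))" for n
    by (simp add: wt_def AA_def g_def add_ac)
  ultimately have "(\<lambda>n. wt (Suc n) * AA c (real (Suc n))) sums (2 * g 0)" by (simp only: diff_zero)
  then have "(\<lambda>j. wt j * AA c (real j)) sums (2 * g 0 + wt 0 * AA c (real 0))"
    using sums_Suc_iff[of "\<lambda>j. wt j * AA c (real j)"] by simp
  moreover have "wt 0 * AA c (real 0) = - 2 * g 0"
    using uu_minus[of c "1/2"] by (simp add: wt_def AA_def g_def)
  ultimately show ?thesis by simp
qed

lemma col_F0: "(\<lambda>i. FF (real (Suc i)) 0) sums (-(pi^2) / 6)"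
proof -
  have "(\<lambda>i. - (1 / (1 + real i)^2)) sums (- (pi^2 / 6))"
    using sums_minus[OF inverse_squares_sums] by simp
  moreover have "FF (real (Suc i)) 0 = - (1 / (1 + real i)^2)" for i
    by (simp add: FF_def power2_eq_square add_ac)
  ultimately show ?thesis by simp
qed

lemma half_cancel: "(2*a - 2*b)/(B*2) = (a - b)/(B::real)"
  by (cases "B = 0") (simp_all add: field_simps)

lemma col_F:
  assumes d: "d > 0"
  shows "(\<lambda>i. FF (real (Suc i)) d) sums (- Psi d / 2)"
proof -
  have "(\<lambda>i. - (psi_t i d / 2)) sums (- (Psi d / 2))"
    using sums_minus[OF sums_divide[OF summable_sums[OF summable_psi[of d]], of 2]] by (simp add: Psi_def)
  moreover have "FF (real (Suc i)) d = - (psi_t i d / 2)" for i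
    by (simp add: FF_def psi_t_def add.commute minus_divide_left half_cancel)
  ultimately show ?thesis by simp
qed

lemma uu_phi: "uu (real (Suc i)) w = phi_t i w / 2"
proof -
  have h: "(2*w/X)/2 = w/(X::real)" for X by (cases "X = 0") (simp_all add: field_simps)
  show ?thesis unfolding uu_def phi_t_def h by (simp add: add.commute)
qed

lemma col_A:
  "(\<lambda>i. AA (real (Suc i)) d) sums ((Phi1 (d - 1/2) - Phi1 (d + 1/2)) / 2)"
proof -
  have "(\<lambda>i. (phi_t i (d - 1/2) - phi_t i (d + 1/2)) / 2) sums ((Phi1 (d - 1/2) - Phi1 (d + 1/2)) / 2)"
    unfolding Phi1_def
    by (intro sums_divide sums_diff summable_sums summable_phi)
  moreover have "AA (real (Suc i)) d = (phi_t i (d - 1/2) - phi_t i (d + 1/2)) / 2" for i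
    unfolding AA_def uu_phi by (simp add: diff_divide_distrib)
  ultimately show ?thesis by (simp only:)
qed

definition WW :: "nat \<Rightarrow> nat \<Rightarrow> real" where
  "WW i j = wt j * (FF (real (Suc i)) (real j) - AA (real (Suc i)) (real j))"

lemma WW_bound: "\<bar>WW i j\<bar> \<le> (18 / (real (Suc i))^2) * (2 / (real (Suc j))^2)"
proof -
  define c where "c = real (Suc i)"
  define d where "d = real j"
  have c1: "c \<ge> 1" unfolding c_def by simp
  have D: "\<bar>FF c d - AA c d\<bar> \<le> 9 / (c^2 * (1 + d^2))" by (rule D_bound[OF c1 d_def])
  have w: "0 \<le> wt j" "wt j \<le> 2" unfolding wt_def by auto
  have c2: "c^2 > 0" using c1 by simp
  have sq: "(d + 1)^2 \<le> 2 * (1 + d^2)"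
  proof -
    have "0 \<le> (d - 1)^2" by simp
    then show ?thesis by (simp add: power2_eq_square algebra_simps)
  qed
  have "\<bar>WW i j\<bar> = wt j * \<bar>FF c d - AA c d\<bar>" unfolding WW_def c_def d_def using w by (simp add: abs_mult)
  also have "\<dots> \<le> 2 * (9 / (c^2 * (1 + d^2)))"
    by (rule mult_mono) (use w D in auto)
  also have "\<dots> = (18 / c^2) * (1 / (1 + d^2))" by simp
  also have "\<dots> \<le> (18 / c^2) * (2 / (d + 1)^2)"
  proof (rule mult_left_mono)
    have p: "(d + 1)^2 > 0" unfolding d_def by (simp add: add_nonneg_pos)
    have q: "1 + d^2 > 0" by (simp add: add_pos_nonneg)
    show "1 / (1 + d^2) \<le> 2 / (d + 1)^2"
      using sq p q by (simp add: divide_simps)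
  qed (use c2 in simp)
  also have "(d + 1) = real (Suc j)" unfolding d_def by simp
  finally show ?thesis unfolding c_def .
qed

lemma csch_sum: "(\<lambda>i. 1 / (sinh (pi * real (Suc i)))^2) sums (1/6 - 1/(2*pi))"
proof -
  define s where "s i = 1 / (sinh (pi * real (Suc i)))^2" for i
  define r where "r i = -(pi^2) * s i" for i
  define Fc where "Fc j = (if j = 0 then -(pi^2)/6 else - Psi (real j) / 2)" for j :: nat
  define Ac where "Ac j = (Phi1 (real j - 1/2) - Phi1 (real j + 1/2)) / 2" for j :: nat
  define cc where "cc j = wt j * (Fc j - Ac j)" for j
  have rs: "(\<lambda>j. WW i j) sums r i" for i
  proof -
    have c: "real (Suc i) > 0" by simp
    have "(\<lambda>j. wt j * FF (real (Suc i)) (real j) - wt j * AA (real (Suc i)) (real j))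
        sums (-(pi^2) / (sinh (pi * real (Suc i)))^2 - 0)"
      by (intro sums_diff row_F row_A c)
    moreover have "-(pi^2) / (sinh (pi * real (Suc i)))^2 - 0 = r i" unfolding r_def s_def by simp
    ultimately show ?thesis unfolding WW_def by (simp only: right_diff_distrib)
  qed
  have cs: "(\<lambda>i. WW i j) sums cc j" for j
  proof -
    have F: "(\<lambda>i. FF (real (Suc i)) (real j)) sums Fc j"
    proof (cases "j = 0")
      case True then show ?thesis using col_F0 by (simp add: Fc_def)
    next
      case False then show ?thesis using col_F[of "real j"] by (simp add: Fc_def)
    qed
    have A: "(\<lambda>i. AA (real (Suc i)) (real j)) sums Ac j" unfolding Ac_def by (rule col_A)
    have "(\<lambda>i. wt j * (FF (real (Suc i)) (real j) - AA (real (Suc i)) (real j))) sums (wt j * (Fc j - Ac j))"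
      by (intro sums_mult sums_diff F A)
    then show ?thesis unfolding WW_def cc_def .
  qed
  have sa: "summable (\<lambda>i. 18 / (real (Suc i))^2)"
    using summable_mult[OF summable_inv_sq, of 18] by simp
  have sb: "summable (\<lambda>j. 2 / (real (Suc j))^2)"
    using summable_mult[OF summable_inv_sq, of 2] by simp
  obtain S where rS: "r sums S" and cS: "cc sums S"
    using fubini_nat[of WW "\<lambda>i. 18 / (real (Suc i))^2" "\<lambda>j. 2 / (real (Suc j))^2", OF WW_bound sa sb _ _ rs cs]
    by auto
  define C where "C = S / (-(pi^2))"
  have pi2: "pi^2 \<noteq> 0" by simp
  have sC: "s sums C"
  proof -
    have "(\<lambda>i. r i / (-(pi^2))) sums (S / (-(pi^2)))" by (rule sums_divide[OF rS])
    moreover have "r i / (-(pi^2)) = s i" for i unfolding r_def using pi2 by simp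
    ultimately show ?thesis unfolding C_def by simp
  qed
  have SC: "S = -(pi^2) * C" unfolding C_def using pi2 by simp
  define g where "g n = Phi1 (real n + 1/2)" for n :: nat
  have ccS: "cc (Suc m) = - (1 / (1 + real m)^2) + pi^2 * s m - (g m - g (Suc m))" for m
  proof -
    have "Psi (real (Suc m)) = 1 / (real (Suc m))^2 - pi^2 / (sinh (pi * real (Suc m)))^2"
      by (rule Psi_formula) simp
    moreover have "real (Suc m) - 1/2 = real m + 1/2" by simp
    ultimately show ?thesis
      unfolding cc_def Fc_def Ac_def g_def s_def wt_def by (simp add: add_ac diff_divide_distrib)
  qed
  have A1: "(\<lambda>m. - (1 / (1 + real m)^2)) sums (- (pi^2 / 6))"
    using sums_minus[OF inverse_squares_sums] by simp
  have A2: "(\<lambda>m. pi^2 * s m) sums (pi^2 * C)" by (rule sums_mult[OF sC])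
  have A3: "(\<lambda>m. g m - g (Suc m)) sums (g 0 - pi)" unfolding g_def by (rule telescope_sums'[OF Phi1_lim])
  have "(\<lambda>m. - (1 / (1 + real m)^2) + pi^2 * s m - (g m - g (Suc m))) sums (- (pi^2 / 6) + pi^2 * C - (g 0 - pi))"
    by (intro sums_diff sums_add A1 A2 A3)
  then have "(\<lambda>m. cc (Suc m)) sums (- (pi^2 / 6) + pi^2 * C - (g 0 - pi))" unfolding ccS .
  then have c2: "cc sums (- (pi^2 / 6) + pi^2 * C - (g 0 - pi) + cc 0)" by (simp only: sums_Suc_iff)
  have cc0: "cc 0 = -(pi^2)/6 + g 0"
    using Phi1_odd[of "1/2"] unfolding cc_def Fc_def Ac_def g_def wt_def by simp
  have "S = - (pi^2 / 6) + pi^2 * C - (g 0 - pi) + cc 0" using sums_unique2[OF cS c2] .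
  then have "-(pi^2) * C = - (pi^2 / 3) + pi^2 * C + pi" unfolding SC cc0 by simp
  then have "2 * pi^2 * C = pi^2 / 3 - pi" by linarith
  then have "C = (pi^2 / 3 - pi) / (2 * pi^2)" using pi2 by (simp add: eq_divide_eq mult.commute)
  also have "(pi^2 / 3 - pi) / (2 * pi^2) = 1/6 - 1/(2*pi)" by (simp add: field_simps power2_eq_square)
  finally have "C = 1/6 - 1/(2*pi)" .
  then show ?thesis using sC unfolding s_def by simp
qed

lemma lambert_swap:
  fixes x :: real assumes x0: "0 < x" and x1: "x < 1"
  shows "\<exists>S. (\<lambda>n. real (Suc n) * x^(Suc n) / (1 - x^(Suc n))) sums S \<and>
             (\<lambda>c. x^(Suc c) / (1 - x^(Suc c))^2) sums S"
proof -
  define W where "W n c = real (Suc n) * x^(Suc n * Suc c)" for n c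
  have nx: "norm x < 1" using x0 x1 by simp
  have bnd: "\<bar>W n c\<bar> \<le> (real (Suc n) * x^(Suc n)) * x^c" for n c
  proof -
    have "Suc n + c \<le> Suc n * Suc c" by simp
    then have "x^(Suc n * Suc c) \<le> x^(Suc n + c)" by (rule power_decreasing) (use x0 x1 in auto)
    then have "x^(Suc n * Suc c) \<le> x^(Suc n) * x^c" by (simp add: power_add)
    then show ?thesis unfolding W_def using x0 by (simp add: abs_mult mult.assoc mult_left_mono)
  qed
  have sa: "summable (\<lambda>n. real (Suc n) * x^(Suc n))"
  proof -
    have "summable (\<lambda>n. x * (of_nat (Suc n) * x^n))"
      by (rule summable_mult[OF sums_summable[OF geometric_deriv_sums[OF nx]]])
    then show ?thesis by (simp add: mult_ac)
  qed
  have sb: "summable (\<lambda>c. x^c)" by (rule summable_geometric) (use nx in simp)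
  have rows: "(\<lambda>c. W n c) sums (real (Suc n) * x^(Suc n) / (1 - x^(Suc n)))" for n
  proof -
    define y where "y = x^(Suc n)"
    have "x^(Suc n) < 1" by (rule power_Suc_less_one[OF x0 x1])
    moreover have "0 < x^(Suc n)" using x0 by simp
    ultimately have ny: "norm y < 1" unfolding y_def by simp
    have "(\<lambda>c. real (Suc n) * (y * y^c)) sums (real (Suc n) * (y * (1 / (1 - y))))"
      by (intro sums_mult geometric_sums ny)
    moreover have "W n c = real (Suc n) * (y * y^c)" for c
    proof -
      have "x^(Suc n * Suc c) = y * y^c" unfolding y_def power_mult by (rule power_Suc)
      then show ?thesis unfolding W_def by simp
    qed
    moreover have "real (Suc n) * (y * (1 / (1 - y))) = real (Suc n) * x^(Suc n) / (1 - x^(Suc n))"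
      unfolding y_def by simp
    ultimately show ?thesis by simp
  qed
  have cols: "(\<lambda>n. W n c) sums (x^(Suc c) / (1 - x^(Suc c))^2)" for c
  proof -
    define z where "z = x^(Suc c)"
    have "x^(Suc c) < 1" by (rule power_Suc_less_one[OF x0 x1])
    moreover have "0 < x^(Suc c)" using x0 by simp
    ultimately have nz: "norm z < 1" unfolding z_def by simp
    have "(\<lambda>n. z * (of_nat (Suc n) * z^n)) sums (z * (1 / (1 - z)^2))"
      by (intro sums_mult geometric_deriv_sums nz)
    moreover have "W n c = z * (of_nat (Suc n) * z^n)" for n
    proof -
      have "x^(Suc n * Suc c) = z^(Suc n)" unfolding z_def power_mult[symmetric] by (simp only: mult.commute)
      then show ?thesis unfolding W_def by (simp add: mult_ac)
    qed
    ultimately show ?thesis unfolding z_def by simp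
  qed
  show ?thesis
    using fubini_nat[of W "\<lambda>n. real (Suc n) * x^(Suc n)" "\<lambda>c. x^c", OF bnd sa sb _ _ rows cols] x0
    by auto
qed

lemma csch_exp:
  fixes t :: real assumes t: "t > 0"
  shows "exp (-2*t) / (1 - exp (-2*t))^2 = 1/4 * (1 / (sinh t)^2)"
proof -
  define E where "E = exp t"
  have E1: "E > 1" unfolding E_def using t by (rule exp_gt_one)
  have e2: "exp (-2*t) = inverse E * inverse E" unfolding E_def by (simp add: exp_minus[symmetric] exp_add[symmetric])
  have sh: "sinh t = (E - inverse E) / 2" unfolding E_def sinh_field_def by (simp add: exp_minus)
  have EE: "E*E > 1" using E1 mult_strict_mono[of 1 E 1 E] by simp
  have nz: "E \<noteq> 0" "E*E - 1 \<noteq> 0" using E1 EE by auto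
  show ?thesis unfolding e2 sh using nz by (simp add: field_simps power2_eq_square)
qed

lemma lambert_value:
  "(\<lambda>n. real (Suc n) * exp (-2*pi)^(Suc n) / (1 - exp (-2*pi)^(Suc n))) sums (1/24 - 1/(8*pi))"
proof -
  obtain S where r: "(\<lambda>n. real (Suc n) * exp (-2*pi)^(Suc n) / (1 - exp (-2*pi)^(Suc n))) sums S"
    and c: "(\<lambda>c. exp (-2*pi)^(Suc c) / (1 - exp (-2*pi)^(Suc c))^2) sums S"
    using lambert_swap[of "exp (-2*pi)"] by auto
  have e: "exp (-2*pi)^(Suc c) / (1 - exp (-2*pi)^(Suc c))^2 = 1/4 * (1 / (sinh (pi * real (Suc c)))^2)" for c
  proof -
    have "exp (-2*pi)^(Suc c) = exp (real (Suc c) * (-2*pi))" by (rule exp_of_nat_mult[symmetric])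
    also have "\<dots> = exp (-2 * (pi * real (Suc c)))" by (rule arg_cong[where f=exp]) (simp add: algebra_simps)
    finally have "exp (-2*pi)^(Suc c) = exp (-2 * (pi * real (Suc c)))" .
    then show ?thesis using csch_exp[of "pi * real (Suc c)"] by simp
  qed
  have "(\<lambda>c. 1/4 * (1 / (sinh (pi * real (Suc c)))^2)) sums (1/4 * (1/6 - 1/(2*pi)))"
    by (rule sums_mult[OF csch_sum])
  then have "S = 1/4 * (1/6 - 1/(2*pi))" using sums_unique2[OF c[unfolded e]] by blast
  also have "\<dots> = 1/24 - 1/(8*pi)" by (simp add: field_simps)
  finally show ?thesis using r by simp
qed

definition qq :: "nat \<Rightarrow> real \<Rightarrow> real" where "qq n t = exp (-2*pi*real (Suc n)*t)"
definition LL :: "nat \<Rightarrow> real \<Rightarrow> real" where "LL n t = ln (1 - qq n t)"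
definition LD :: "nat \<Rightarrow> real \<Rightarrow> real" where "LD n t = 2*pi*real (Suc n) * qq n t / (1 - qq n t)"

lemma qq_pos: "0 < qq n t" unfolding qq_def by simp

lemma qq_lt1: "t > 0 \<Longrightarrow> qq n t < 1"
  unfolding qq_def by (simp add: mult_pos_pos)

lemma e_factor: "e (of_nat (Suc n) * Complex 0 t) = complex_of_real (qq n t)"
proof -
  have "2 * of_real pi * \<i> * (of_nat (Suc n) * Complex 0 t)
      = (\<i> * \<i>) * (2 * of_real pi * of_nat (Suc n) * complex_of_real t)"
    unfolding Complex_eq by (simp only: mult_ac of_real_0 add_0_left)
  also have "\<dots> = complex_of_real (-2*pi*real (Suc n)*t)" unfolding i_squared by simp
  finally have "2 * of_real pi * \<i> * (of_nat (Suc n) * Complex 0 t) = complex_of_real (-2*pi*real (Suc n)*t)" .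
  then show ?thesis unfolding e_def qq_def by (simp only: exp_of_real)
qed

lemma e_first: "e (Complex 0 t / 6) = complex_of_real (exp (-pi*t/3))"
proof -
  have "2 * of_real pi * \<i> * (Complex 0 t / 6) = (\<i> * \<i>) * (2 * of_real pi * complex_of_real t / 6)"
    unfolding Complex_eq by (simp only: mult_ac of_real_0 add_0_left times_divide_eq_right)
  also have "\<dots> = complex_of_real (-pi*t/3)" unfolding i_squared by simp
  finally have "2 * of_real pi * \<i> * (Complex 0 t / 6) = complex_of_real (-pi*t/3)" .
  then show ?thesis unfolding e_def by (simp only: exp_of_real)
qed

lemma qq_deriv: "(qq n has_real_derivative (-2*pi*real (Suc n)) * qq n t) (at t within S)"
  unfolding qq_def by (auto intro!: derivative_eq_intros)

lemma LL_deriv: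
  assumes t: "t > 0"
  shows "(LL n has_real_derivative LD n t) (at t within S)"
proof -
  have p: "0 < 1 - qq n t" using qq_lt1[OF t] by simp
  have i: "((\<lambda>t. 1 - qq n t) has_real_derivative (0 - (-2*pi*real (Suc n)) * qq n t)) (at t within S)"
    by (intro DERIV_diff DERIV_const qq_deriv)
  have D: "(LL n has_real_derivative (1 / (1 - qq n t) * (0 - (-2*pi*real (Suc n)) * qq n t))) (at t within S)"
    unfolding LL_def by (rule DERIV_chain2[OF DERIV_ln_divide[OF p] i])
  have e: "1 / (1 - qq n t) * (0 - (-2*pi*real (Suc n)) * qq n t) = LD n t"
    unfolding LD_def by simp
  show ?thesis using D unfolding e .
qed

lemma qq_bound:
  assumes a: "a > 0" and s: "s \<ge> a"
  shows "qq n s \<le> exp (-2*pi*a) ^ Suc n"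
proof -
  have "exp (-2*pi*a) ^ Suc n = exp (real (Suc n) * (-2*pi*a))" by (rule exp_of_nat_mult[symmetric])
  also have "\<dots> = qq n a" unfolding qq_def by (rule arg_cong[where f=exp]) (simp add: algebra_simps)
  finally have e: "exp (-2*pi*a) ^ Suc n = qq n a" .
  have "qq n s \<le> qq n a" unfolding qq_def using s by (simp add: mult_left_mono)
  then show ?thesis unfolding e .
qed

lemma r_facts: "a > 0 \<Longrightarrow> 0 < exp (-2*pi*a) \<and> exp (-2*pi*a) < 1"
  by (simp add: mult_pos_pos)

lemma LD_bound:
  assumes a: "a > 0" and s: "s \<ge> a"
  shows "norm (LD n s) \<le> 2*pi / (1 - exp (-2*pi*a)) * exp (-2*pi*a) * (real (Suc n) * exp (-2*pi*a) ^ n)"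
proof -
  define r where "r = exp (-2*pi*a)"
  have r: "0 < r" "r < 1" using r_facts[OF a] unfolding r_def by auto
  have s0: "s > 0" using a s by simp
  have q1: "qq n s \<le> r ^ Suc n" unfolding r_def by (rule qq_bound[OF a s])
  have "r ^ Suc n \<le> r" using r by (simp add: power_le_one mult_left_le)
  then have q2: "1 - qq n s \<ge> 1 - r" using q1 by simp
  have qp: "0 < qq n s" by (rule qq_pos)
  have "norm (LD n s) = 2*pi*real (Suc n) * qq n s / (1 - qq n s)"
  proof -
    have ql: "qq n s < 1" by (rule qq_lt1[OF s0])
    then show ?thesis unfolding LD_def using qp by simp
  qed
  also have "\<dots> \<le> 2*pi*real (Suc n) * r ^ Suc n / (1 - r)"
    by (rule frac_le) (use q1 q2 r qp in \<open>auto intro!: mult_left_mono\<close>)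
  also have "\<dots> = 2*pi / (1 - r) * r * (real (Suc n) * r ^ n)" by simp
  finally show ?thesis unfolding r_def .
qed

lemma LD_summable_bound:
  assumes a: "a > 0"
  shows "summable (\<lambda>n. 2*pi / (1 - exp (-2*pi*a)) * exp (-2*pi*a) * (real (Suc n) * exp (-2*pi*a) ^ n))"
proof -
  have "norm (exp (-2*pi*a)) < 1" using r_facts[OF a] by simp
  from sums_summable[OF geometric_deriv_sums[OF this]] show ?thesis
    by (intro summable_mult) simp
qed

lemma summable_LD: "t > 0 \<Longrightarrow> summable (\<lambda>n. LD n t)"
  using summable_comparison_test'[OF LD_summable_bound, of t 0 "\<lambda>n. LD n t"] LD_bound[of t t] by auto

lemma LL_bound:
  assumes t: "t > 0"
  shows "norm (LL n t) \<le> 1 / (1 - exp (-2*pi*t)) * exp (-2*pi*t) ^ Suc n"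
proof -
  define r where "r = exp (-2*pi*t)"
  have r: "0 < r" "r < 1" using r_facts[OF t] unfolding r_def by auto
  define y where "y = qq n t"
  have y: "0 < y" "y < 1" unfolding y_def using qq_pos qq_lt1[OF t] by auto
  have q1: "y \<le> r ^ Suc n" unfolding r_def y_def by (rule qq_bound[OF t]) simp
  have "r ^ Suc n \<le> r" using r by (simp add: power_le_one mult_left_le)
  then have q2: "1 - y \<ge> 1 - r" using q1 by simp
  have l0: "ln (1 - y) \<le> 0" using y by simp
  have "ln (1 / (1 - y)) \<le> 1 / (1 - y) - 1" by (rule ln_le_minus_one) (use y in simp)
  then have "- ln (1 - y) \<le> y / (1 - y)" using y by (simp add: ln_div field_simps)
  then have "norm (LL n t) \<le> y / (1 - y)" unfolding LL_def y_def[symmetric] using l0 by simp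
  also have "\<dots> \<le> r ^ Suc n / (1 - r)"
    by (rule frac_le) (use q1 q2 r y in auto)
  finally show ?thesis unfolding r_def by simp
qed

lemma summable_LL: "t > 0 \<Longrightarrow> summable (\<lambda>n. LL n t)"
proof -
  assume t: "t > 0"
  have "norm (exp (-2*pi*t)) < 1" using r_facts[OF t] by simp
  then have "summable (\<lambda>n. exp (-2*pi*t) ^ Suc n)"
    using summable_geometric[of "exp (-2*pi*t)"] by (simp add: summable_mult)
  then have "summable (\<lambda>n. 1 / (1 - exp (-2*pi*t)) * exp (-2*pi*t) ^ Suc n)" by (rule summable_mult)
  then show ?thesis using summable_comparison_test'[of _ 0 "\<lambda>n. LL n t"] LL_bound[OF t] by blast
qed

definition Ed :: "real \<Rightarrow> real" where "Ed t = (\<Sum>n. LD n t)"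
definition Gf :: "real \<Rightarrow> real" where "Gf t = ln t - pi*t/3 + 4 * (\<Sum>n. LL n t)"
definition Dg :: "real \<Rightarrow> real" where "Dg t = 1/t - pi/3 + 4 * Ed t"

lemma Lsum_deriv:
  assumes t: "t > 0"
  shows "((\<lambda>x. \<Sum>n. LL n x) has_real_derivative Ed t) (at t)"
proof -
  define a where "a = t/2"
  have a: "a > 0" "a < t" unfolding a_def using t by auto
  let ?S = "{a<..}"
  have U: "uniformly_convergent_on ?S (\<lambda>n x. \<Sum>i<n. LD i x)"
    by (rule Weierstrass_m_test'[OF _ LD_summable_bound[OF a(1)]]) (use LD_bound a in auto)
  show ?thesis unfolding Ed_def
    by (rule has_field_derivative_series'(2)[of ?S LL LD t t, OF _ _ U])
       (use a t in \<open>auto intro!: LL_deriv summable_LL simp: interior_open\<close>)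
qed

lemma Gf_deriv:
  assumes t: "t > 0"
  shows "(Gf has_real_derivative Dg t) (at t)"
proof -
  have "((\<lambda>x. ln x - pi*x/3 + 4 * (\<Sum>n. LL n x)) has_real_derivative (1/t - pi/3 + 4 * Ed t)) (at t)"
    by (intro derivative_eq_intros Lsum_deriv[OF t] refl) (use t Lsum_deriv[OF t] in auto)
  then show ?thesis unfolding Gf_def[abs_def] Dg_def .
qed

lemma exp4ln: "y > 0 \<Longrightarrow> exp (4 * ln y) = (y::real)^4"
proof -
  assume y: "y > 0"
  have "exp (real 4 * ln y) = exp (ln y) ^ 4" by (rule exp_of_nat_mult)
  then show ?thesis using y by simp
qed

lemma LL_exp:
  assumes t: "t > 0"
  shows "(1 - e (of_nat (Suc n) * Complex 0 t))^4 = exp (complex_of_real (4 * LL n t))"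
proof -
  have p: "0 < 1 - qq n t" using qq_lt1[OF t] by simp
  have "(1 - e (of_nat (Suc n) * Complex 0 t))^4 = complex_of_real ((1 - qq n t)^4)"
    unfolding e_factor by simp
  also have "(1 - qq n t)^4 = exp (4 * LL n t)" unfolding LL_def using exp4ln[OF p] by simp
  also have "complex_of_real (exp (4 * LL n t)) = exp (complex_of_real (4 * LL n t))"
    by (rule exp_of_real[symmetric])
  finally show ?thesis .
qed

lemma eta_val:
  assumes t: "t > 0"
  shows "eta (Complex 0 t) = complex_of_real (exp (-pi*t/3 + 4 * (\<Sum>n. LL n t)))"
proof -
  have sL: "summable (\<lambda>n. 4 * LL n t)" by (rule summable_mult[OF summable_LL[OF t]])
  have sums1: "(\<lambda>n. 4 * LL n t) sums (4 * (\<Sum>n. LL n t))"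
    by (rule sums_mult[OF summable_sums[OF summable_LL[OF t]]])
  have sums2: "(\<lambda>n. complex_of_real (4 * LL n t)) sums complex_of_real (4 * (\<Sum>n. LL n t))"
    by (rule sums_of_real[OF sums1])
  have sC: "summable (\<lambda>n. complex_of_real (4 * LL n t))" using sums2 by (rule sums_summable)
  have "(\<Prod>n. (1 - e (of_nat (Suc n) * Complex 0 t))^4) = (\<Prod>n. exp (complex_of_real (4 * LL n t)))"
    by (simp only: LL_exp[OF t])
  also have "\<dots> = exp (\<Sum>n. complex_of_real (4 * LL n t))" by (rule prodinf_exp[OF sC])
  also have "(\<Sum>n. complex_of_real (4 * LL n t)) = complex_of_real (4 * (\<Sum>n. LL n t))"
    using sums2 by (rule sums_unique[symmetric])
  also have "exp (complex_of_real (4 * (\<Sum>n. LL n t))) = complex_of_real (exp (4 * (\<Sum>n. LL n t)))"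
    by (rule exp_of_real)
  finally have P: "(\<Prod>n. (1 - e (of_nat (Suc n) * Complex 0 t))^4) = complex_of_real (exp (4 * (\<Sum>n. LL n t)))" .
  show ?thesis unfolding eta_def e_first P by (simp only: of_real_mult[symmetric] exp_add)
qed

lemma f1_val:
  assumes t: "t > 0"
  shows "f1 (Complex 0 t) = Gf t"
proof -
  define X where "X = -pi*t/3 + 4 * (\<Sum>n. LL n t)"
  have "f1 (Complex 0 t) = ln (cmod (complex_of_real (t * exp X)))"
    unfolding f1_def eta_val[OF t] X_def by simp
  also have "\<dots> = ln (t * exp X)"
  proof -
    have "\<bar>t * exp X\<bar> = t * exp X" using t by simp
    then show ?thesis by (simp only: norm_of_real)
  qed
  also have "\<dots> = ln t + X" using t by (simp add: ln_mult)
  finally show ?thesis unfolding X_def Gf_def by simp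
qed

lemma Ed1: "Ed 1 = pi/12 - 1/4"
proof -
  have "(\<lambda>n. 2*pi * (real (Suc n) * exp (-2*pi)^(Suc n) / (1 - exp (-2*pi)^(Suc n)))) sums (2*pi * (1/24 - 1/(8*pi)))"
    by (rule sums_mult[OF lambert_value])
  moreover have "LD n 1 = 2*pi * (real (Suc n) * exp (-2*pi)^(Suc n) / (1 - exp (-2*pi)^(Suc n)))" for n
  proof -
    have "exp (-2*pi)^(Suc n) = exp (real (Suc n) * (-2*pi))" by (rule exp_of_nat_mult[symmetric])
    also have "\<dots> = qq n 1" unfolding qq_def by (rule arg_cong[where f=exp]) (simp add: algebra_simps)
    finally show ?thesis unfolding LD_def by simp
  qed
  ultimately have "(\<lambda>n. LD n 1) sums (2*pi * (1/24 - 1/(8*pi)))" by simp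
  then have "Ed 1 = 2*pi * (1/24 - 1/(8*pi))" unfolding Ed_def by (rule sums_unique[symmetric])
  also have "\<dots> = pi/12 - 1/4" by (simp add: field_simps)
  finally show ?thesis .
qed

lemma Dg1: "Dg 1 = 0" unfolding Dg_def Ed1 by simp

lemma ratio_mono:
  fixes y1 y2 :: real assumes "0 \<le> y1" "y1 < y2" "y2 < 1"
  shows "y1 / (1 - y1) < y2 / (1 - y2)"
proof -
  have "y1 / (1 - y1) \<le> y1 / (1 - y2)" by (rule frac_le) (use assms in auto)
  also have "\<dots> < y2 / (1 - y2)" by (rule divide_strict_right_mono) (use assms in auto)
  finally show ?thesis .
qed

lemma LD_strict:
  assumes s: "0 < s" and st: "s < t"
  shows "LD n t < LD n s"
proof -
  have t: "t > 0" using s st by simp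
  have "qq n t < qq n s" unfolding qq_def using st by (simp add: mult_strict_left_mono)
  then have "qq n t / (1 - qq n t) < qq n s / (1 - qq n s)"
    by (intro ratio_mono qq_lt1 s less_imp_le[OF qq_pos])
  then have "2*pi*real (Suc n) * (qq n t / (1 - qq n t)) < 2*pi*real (Suc n) * (qq n s / (1 - qq n s))"
    by (intro mult_strict_left_mono) simp_all
  then show ?thesis unfolding LD_def by simp
qed

lemma Ed_strict:
  assumes s: "0 < s" and st: "s < t"
  shows "Ed t < Ed s"
proof -
  have t: "t > 0" using s st by simp
  have "0 < (\<Sum>n. LD n s - LD n t)"
    by (intro suminf_pos summable_diff summable_LD s t) (use LD_strict[OF s st] in simp)
  also have "(\<Sum>n. LD n s - LD n t) = Ed s - Ed t"
    unfolding Ed_def by (rule suminf_diff[symmetric]) (intro summable_LD s t)+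
  finally show ?thesis by simp
qed

lemma Dg_strict:
  assumes s: "0 < s" and st: "s < t"
  shows "Dg t < Dg s"
proof -
  have "1/t < 1/s" using s st by (simp add: frac_less2)
  then show ?thesis unfolding Dg_def using Ed_strict[OF s st] by simp
qed

theorem lemma4p2:
  shows "(\<forall>y>0. (\<lambda>t. f1 (Complex 0 t)) differentiable (at y)) \<and>
         (\<forall>y>0. deriv (\<lambda>t. f1 (Complex 0 t)) y = 0 \<longleftrightarrow> y = 1) \<and>
         (\<forall>y. 0 < y \<and> y < 1 \<longrightarrow> Y1 (Complex 0 y) > 0) \<and>
         (\<forall>y>1. Y1 (Complex 0 y) < 0)"
proof -
  have D: "((\<lambda>t. f1 (Complex 0 t)) has_real_derivative Dg y) (at y)" if y: "y > 0" for y
    by (rule has_field_derivative_transform_within_open[OF Gf_deriv[OF y], of "{0<..}"])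
       (use y f1_val in auto)
  have dv: "deriv (\<lambda>t. f1 (Complex 0 t)) y = Dg y" if "y > 0" for y
    by (rule DERIV_imp_deriv[OF D[OF that]])
  have Y: "Y1 (Complex 0 y) = deriv (\<lambda>t. f1 (Complex 0 t)) y" for y unfolding Y1_def by simp
  have pos: "Dg y > 0" if "0 < y" "y < 1" for y using Dg_strict[OF that] Dg1 by simp
  have neg: "Dg y < 0" if "y > 1" for y using Dg_strict[of 1 y] that Dg1 by simp
  have c1: "\<forall>y>0. (\<lambda>t. f1 (Complex 0 t)) differentiable (at y)"
    using D by (auto intro!: differentiableI simp: has_field_derivative_def)
  have c2: "\<forall>y>0. deriv (\<lambda>t. f1 (Complex 0 t)) y = 0 \<longleftrightarrow> y = 1"
  proof (intro allI impI)
    fix y :: real assume y: "y > 0"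
    show "deriv (\<lambda>t. f1 (Complex 0 t)) y = 0 \<longleftrightarrow> y = 1"
      unfolding dv[OF y]
      using pos[OF y] neg[of y] Dg1 by (cases "y < 1"; cases "y > 1") auto
  qed
  have c3: "\<forall>y. 0 < y \<and> y < 1 \<longrightarrow> Y1 (Complex 0 y) > 0" using Y dv pos by simp
  have c4: "\<forall>y>1. Y1 (Complex 0 y) < 0" using Y dv neg by simp
  show ?thesis using c1 c2 c3 c4 by blast
qed

end
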